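(* Let $P_1$ be the uniform distribution on $J_1=[0,\frac12]$, let $P_2$ be the uniform distribution on $J_2=[\frac12,1]$, and let $P=\frac34P_1+\frac14P_2$. For $n\ge 2$, let $\alpha_n$ be an optimal set of $n$-means for $P$. Then $\alpha_n\cap J_1\neq\emptyset$ and $\alpha_n\cap J_2\neq\emptyset$.
   Context: For a finite set $\alpha\subset\mathbb R$, $V(P;\alpha)=\int\min_{a\in\alpha}(x-a)^2\,dP(x)$; $V_n=\inf\{V(P;\alpha):\mathrm{card}(\alpha)\le n\}$; an optimal set of $n$-means is a set $\alpha$ with $\mathrm{card}(\alpha)\le n$ and $V(P;\alpha)=V_n$. *)

theory Defs
  imports "HOL-Analysis.Analysis"
begin

definition J1 :: "real set" where "J1 = {0..1/2}"
definition J2 :: "real set" where "J2 = {1/2..1}"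

definition P1 :: "real measure" where "P1 = uniform_measure lborel J1"
definition P2 :: "real measure" where "P2 = uniform_measure lborel J2"

definition P :: "real measure" where
  "P = measure_of UNIV (sets borel)
        (\<lambda>A. ennreal (3/4) * emeasure P1 A + ennreal (1/4) * emeasure P2 A)"

definition quant_err :: "real measure \<Rightarrow> real set \<Rightarrow> real" where
  "quant_err Q \<alpha> = (\<integral>x. Min ((\<lambda>a. (x - a)^2) ` \<alpha>) \<partial>Q)"

text \<open>Admissible codebooks: finite nonempty sets with at most n points
  (the empty set gives infinite error and is excluded).\<close>
definition admissible :: "nat \<Rightarrow> real set \<Rightarrow> bool" where
  "admissible n \<alpha> \<longleftrightarrow> finite \<alpha> \<and> \<alpha> \<noteq> {} \<and> card \<alpha> \<le> n"

definition V_n :: "real measure \<Rightarrow> nat \<Rightarrow> real" where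
  "V_n Q n = Inf {quant_err Q \<alpha> | \<alpha>. admissible n \<alpha>}"

definition optimal_n_means :: "real measure \<Rightarrow> nat \<Rightarrow> real set \<Rightarrow> bool" where
  "optimal_n_means Q n \<alpha> \<longleftrightarrow> admissible n \<alpha> \<and> quant_err Q \<alpha> = V_n Q n"

end

theory Submission
  imports Defs
begin

definition dens :: "real \<Rightarrow> real" where
  "dens x = 3/2 * indicator J1 x + 1/2 * indicator J2 x"

lemma J_sets[measurable]: "J1 \<in> sets borel" "J2 \<in> sets borel"
  unfolding J1_def J2_def by auto

lemma dens_meas[measurable]: "dens \<in> borel_measurable borel"
  unfolding dens_def by measurable

lemma emP1: "A \<in> sets borel \<Longrightarrow> emeasure P1 A = 2 * emeasure lborel (J1 \<inter> A)"
proof -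
  assume A: "A \<in> sets borel"
  have "emeasure lborel J1 = ennreal (1/2)" unfolding J1_def by simp
  then have "emeasure P1 A = emeasure lborel (J1 \<inter> A) / ennreal (1/2)"
    unfolding P1_def using A by (subst emeasure_uniform_measure) auto
  also have "\<dots> = 2 * emeasure lborel (J1 \<inter> A)"
    unfolding divide_ennreal_def by (subst inverse_ennreal) (auto simp: mult.commute simp del: ennreal_half)
  finally show ?thesis .
qed
lemma emP2: "A \<in> sets borel \<Longrightarrow> emeasure P2 A = 2 * emeasure lborel (J2 \<inter> A)"
proof -
  assume A: "A \<in> sets borel"
  have "emeasure lborel J2 = ennreal (1/2)" unfolding J2_def by simp
  then have "emeasure P2 A = emeasure lborel (J2 \<inter> A) / ennreal (1/2)"
    unfolding P2_def using A by (subst emeasure_uniform_measure) auto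
  also have "\<dots> = 2 * emeasure lborel (J2 \<inter> A)"
    unfolding divide_ennreal_def by (subst inverse_ennreal) (auto simp: mult.commute simp del: ennreal_half)
  finally show ?thesis .
qed

lemma P_density: "P = density lborel (\<lambda>x. ennreal (dens x))"
proof -
  let ?D = "density lborel (\<lambda>x. ennreal (dens x))"
  have "P = measure_of UNIV (sets borel) (emeasure ?D)"
    unfolding P_def
  proof (rule measure_of_eq)
    fix A :: "real set" assume "A \<in> sigma_sets UNIV (sets borel)"
    then have A[measurable]: "A \<in> sets borel" by (simp add: sets.sigma_sets_eq[of borel, simplified])
    have "emeasure ?D A = (\<integral>\<^sup>+ x. ennreal (dens x) * indicator A x \<partial>lborel)"
      by (rule emeasure_density) auto
    also have "\<dots> = (\<integral>\<^sup>+ x. ennreal (3/2 * indicator (J1 \<inter> A) x) + ennreal (1/2 * indicator (J2 \<inter> A) x) \<partial>lborel)"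
      by (intro nn_integral_cong) (auto simp: dens_def indicator_def ennreal_plus[symmetric] simp del: ennreal_plus ennreal_half)
    also have "\<dots> = (\<integral>\<^sup>+ x. ennreal (3/2) * indicator (J1 \<inter> A) x + ennreal (1/2) * indicator (J2 \<inter> A) x \<partial>lborel)"
      by (intro nn_integral_cong) (auto simp: indicator_def)
    also have "\<dots> = ennreal (3/2) * emeasure lborel (J1 \<inter> A) + ennreal (1/2) * emeasure lborel (J2 \<inter> A)"
      by (subst nn_integral_add) (auto simp: nn_integral_cmult)
    also have "\<dots> = ennreal (3/4) * emeasure P1 A + ennreal (1/4) * emeasure P2 A"
      using A by (simp add: emP1 emP2 mult.assoc[symmetric] ennreal_mult'[symmetric] ennreal_numeral[symmetric] del: ennreal_numeral)
    finally show "ennreal (3/4) * emeasure P1 A + ennreal (1/4) * emeasure P2 A = emeasure ?D A" by simp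
  qed auto
  also have "\<dots> = ?D"
    using measure_of_of_measure[of ?D] by simp
  finally show ?thesis .
qed

lemma integral_P:
  fixes g :: "real \<Rightarrow> real"
  assumes g: "continuous_on UNIV g"
  shows "(\<integral>x. g x \<partial>P) = 3/2 * integral {0..1/2} g + 1/2 * integral {1/2..1} g"
proof -
  have gm[measurable]: "g \<in> borel_measurable borel"
    using g by (simp add: borel_measurable_continuous_onI)
  have i1: "set_integrable lborel {0..1/2} g" "set_integrable lborel {1/2..1} g"
    by (auto intro!: borel_integrable_atLeastAtMost' continuous_on_subset[OF g])
  have "(\<integral>x. g x \<partial>P) = (\<integral>x. dens x *\<^sub>R g x \<partial>lborel)"
    unfolding P_density by (rule integral_density) (auto simp: dens_def)
  also have "\<dots> = (\<integral>x. 3/2 * (indicator {0..1/2} x *\<^sub>R g x) + 1/2 * (indicator {1/2..1} x *\<^sub>R g x) \<partial>lborel)"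
    by (intro Bochner_Integration.integral_cong) (auto simp: dens_def J1_def J2_def algebra_simps)
  also have "\<dots> = 3/2 * (LINT x : {0..1/2} | lborel. g x) + 1/2 * (LINT x : {1/2..1} | lborel. g x)"
    using i1 unfolding set_integrable_def set_lebesgue_integral_def by simp
  also have "\<dots> = 3/2 * integral {0..1/2} g + 1/2 * integral {1/2..1} g"
    using i1 by (simp add: set_borel_integral_eq_integral)
  finally show ?thesis .
qed



definition qm :: "real set \<Rightarrow> real \<Rightarrow> real" where
  "qm A x = Min ((\<lambda>a. (x - a)^2) ` A)"

lemma qm_cont:
  assumes "finite A" "A \<noteq> {}" shows "continuous_on UNIV (qm A)"
  using assms
proof (induction A rule: finite_ne_induct)
  case (singleton x) then show ?case by (simp add: qm_def continuous_intros)
next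
  case (insert a A)
  have "qm (insert a A) = (\<lambda>x. min ((x - a)^2) (qm A x))"
    using insert by (auto simp: qm_def fun_eq_iff)
  then show ?case using insert by (auto intro!: continuous_intros)
qed

lemma qm_le: "finite A \<Longrightarrow> a \<in> A \<Longrightarrow> qm A x \<le> (x - a)^2"
  unfolding qm_def by auto

lemma qm_ge: "finite A \<Longrightarrow> A \<noteq> {} \<Longrightarrow> (\<And>a. a \<in> A \<Longrightarrow> c \<le> (x - a)^2) \<Longrightarrow> c \<le> qm A x"
  unfolding qm_def by auto

lemma qe_formula:
  assumes "finite A" "A \<noteq> {}"
  shows "quant_err P A = 3/2 * integral {0..1/2} (qm A) + 1/2 * integral {1/2..1} (qm A)"
proof -
  have "quant_err P A = (\<integral>x. qm A x \<partial>P)" unfolding quant_err_def qm_def by simp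
  then show ?thesis using integral_P[OF qm_cont[OF assms]] by simp
qed

lemma int_le:
  fixes f g :: "real \<Rightarrow> real"
  assumes "continuous_on {a..b} f" "continuous_on {a..b} g" "\<And>x. a \<le> x \<Longrightarrow> x \<le> b \<Longrightarrow> f x \<le> g x"
  shows "integral {a..b} f \<le> integral {a..b} g"
  using assms by (intro integral_le integrable_continuous_interval) auto

lemma int_poly:
  fixes a b c0 c1 :: real
  assumes "a \<le> b"
  shows "integral {a..b} (\<lambda>x. c0 + c1 * x) = c0 * (b - a) + c1 * (b^2 - a^2) / 2"
proof -
  have "((\<lambda>x. c0 + c1 * x) has_integral ((\<lambda>x. c0 * x + c1 * x^2 / 2) b - (\<lambda>x. c0 * x + c1 * x^2 / 2) a)) {a..b}"
    using assms
    by (intro fundamental_theorem_of_calculus)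
       (auto intro!: derivative_eq_intros simp: has_real_derivative_iff_has_vector_derivative[symmetric])
  then have "integral {a..b} (\<lambda>x. c0 + c1 * x) = (\<lambda>x. c0 * x + c1 * x^2 / 2) b - (\<lambda>x. c0 * x + c1 * x^2 / 2) a"
    by (rule integral_unique)
  then show ?thesis by (simp add: field_simps)
qed

lemma int_const_le:
  fixes f :: "real \<Rightarrow> real"
  assumes "a \<le> b" "continuous_on {a..b} f" "\<And>x. a \<le> x \<Longrightarrow> x \<le> b \<Longrightarrow> f x \<le> c"
  shows "integral {a..b} f \<le> c * (b - a)"
proof -
  have "integral {a..b} f \<le> integral {a..b} (\<lambda>x. c + 0 * x)"
    using assms by (intro int_le) (auto intro: continuous_intros)
  also have "\<dots> = c * (b - a)" using int_poly[OF assms(1), of c 0] by simp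
  finally show ?thesis .
qed

lemma qe_diff:
  assumes "finite A" "A \<noteq> {}" "finite B" "B \<noteq> {}"
  shows "quant_err P B - quant_err P A =
     3/2 * integral {0..1/2} (\<lambda>x. qm B x - qm A x) + 1/2 * integral {1/2..1} (\<lambda>x. qm B x - qm A x)"
proof -
  have c: "continuous_on S (qm A)" "continuous_on S (qm B)" for S
    using qm_cont assms continuous_on_subset by blast+
  have i: "qm A integrable_on {a..b}" "qm B integrable_on {a..b}" for a b :: real
    using c by (auto intro: integrable_continuous_interval)
  show ?thesis using i
    by (simp add: qe_formula assms integral_diff algebra_simps)
qed

lemma split_int:
  fixes f :: "real \<Rightarrow> real"
  assumes "a \<le> c" "c \<le> b" "continuous_on {a..b} f"
  shows "integral {a..b} f = integral {a..c} f + integral {c..b} f"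
  using assms Henstock_Kurzweil_Integration.integral_combine[OF assms(1,2) integrable_continuous_interval[OF assms(3)]] by simp

lemma cont_D: "finite A \<Longrightarrow> A \<noteq> {} \<Longrightarrow> finite B \<Longrightarrow> B \<noteq> {} \<Longrightarrow> continuous_on S (\<lambda>x. qm B x - qm A x)"
  by (intro continuous_intros continuous_on_subset[OF qm_cont]) auto

lemma mono_qe:
  assumes "finite A" "A \<noteq> {}" "finite B" "B \<noteq> {}"
    and le: "\<And>x. 0 \<le> x \<Longrightarrow> x \<le> 1 \<Longrightarrow> qm B x \<le> qm A x"
  shows "quant_err P B \<le> quant_err P A"
proof -
  have "integral {0..1/2} (\<lambda>x. qm B x - qm A x) \<le> 0 * (1/2 - 0)"
    using le by (intro int_const_le cont_D assms) auto
  moreover have "integral {1/2..1} (\<lambda>x. qm B x - qm A x) \<le> 0 * (1 - 1/2)"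
    using le by (intro int_const_le cont_D assms) auto
  ultimately show ?thesis using qe_diff[OF assms(1-4)] by linarith
qed




lemma ineq0:
  fixes a x :: real
  assumes "a \<notin> J1" "0 \<le> x" "x \<le> 1/8"
  shows "x^2 + min (1/8) (a^2) \<le> (x - a)^2"
proof (cases "a < 0")
  case True
  have "a * x \<le> 0" using True assms by (simp add: mult_nonpos_nonneg)
  then have "x^2 + a^2 \<le> (x-a)^2" by (simp add: power2_eq_square algebra_simps)
  then show ?thesis by linarith
next
  case False
  then have a: "a > 1/2" using assms by (auto simp: J1_def)
  have "1/2 * (1/4) \<le> a * (a - 2*x)" using a assms by (intro mult_mono) auto
  then have "x^2 + 1/8 \<le> (x-a)^2" by (simp add: power2_eq_square algebra_simps)
  then show ?thesis by linarith
qed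

lemma ineq1:
  fixes a x :: real
  assumes "a \<notin> J2" "7/8 \<le> x" "x \<le> 1"
  shows "(x - 1)^2 + min (1/8) ((a-1)^2) \<le> (x - a)^2"
proof (cases "a > 1")
  case True
  have "(a-1) * (a-1) \<le> (a - 1) * (a + 1 - 2*x)" using True assms by (intro mult_left_mono) auto
  then have "(x-1)^2 + (a-1)^2 \<le> (x-a)^2" by (simp add: power2_eq_square algebra_simps)
  then show ?thesis by linarith
next
  case False
  then have a: "a < 1/2" using assms by (auto simp: J2_def)
  have "3/8 * (3/8) \<le> (x - a) * (x - a)" using a assms by (intro mult_mono) auto
  moreover have "(1 - x) * (1 - x) \<le> 1/8 * (1/8)" using assms by (intro mult_mono) auto
  ultimately have "(x-1)^2 + 1/8 \<le> (x-a)^2" by (simp add: power2_eq_square algebra_simps)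
  then show ?thesis by linarith
qed

lemma strict0:
  assumes A: "finite A" "A \<noteq> {}" "A \<inter> J1 = {}"
    and B: "finite B" "B \<noteq> {}" "0 \<in> B"
    and le: "\<And>x. 0 \<le> x \<Longrightarrow> x \<le> 1 \<Longrightarrow> qm B x \<le> qm A x"
  shows "quant_err P B < quant_err P A"
proof -
  define \<delta> where "\<delta> = Min ((\<lambda>a. min (1/8) (a^2)) ` A)"
  have "0 \<notin> A" using A(3) by (auto simp: J1_def)
  then have dpos: "\<delta> > 0" unfolding \<delta>_def using A by (subst Min_gr_iff) auto
  have d: "qm B x - qm A x \<le> - \<delta>" if x: "0 \<le> x" "x \<le> 1/8" for x
  proof -
    have "qm B x \<le> (x - 0)^2" by (rule qm_le[OF B(1,3)])
    moreover have "x^2 + \<delta> \<le> qm A x"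
    proof (rule qm_ge[OF A(1,2)])
      fix a assume a: "a \<in> A"
      then have "\<delta> \<le> min (1/8) (a^2)" unfolding \<delta>_def by (intro Min_le) (use A in auto)
      moreover have "a \<notin> J1" using a A(3) by auto
      ultimately show "x^2 + \<delta> \<le> (x - a)^2" using ineq0[of a x] x by linarith
    qed
    ultimately show ?thesis by simp
  qed
  have "integral {0..1/2} (\<lambda>x. qm B x - qm A x) = integral {0..1/8} (\<lambda>x. qm B x - qm A x) + integral {1/8..1/2} (\<lambda>x. qm B x - qm A x)"
    by (intro split_int cont_D A B) auto
  moreover have "integral {0..1/8} (\<lambda>x. qm B x - qm A x) \<le> (-\<delta>) * (1/8 - 0)"
    using d by (intro int_const_le cont_D A B) auto
  moreover have "integral {1/8..1/2} (\<lambda>x. qm B x - qm A x) \<le> 0 * (1/2 - 1/8)"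
    using le by (intro int_const_le cont_D A B) auto
  moreover have "integral {1/2..1} (\<lambda>x. qm B x - qm A x) \<le> 0 * (1 - 1/2)"
    using le by (intro int_const_le cont_D A B) auto
  ultimately show ?thesis using qe_diff[OF A(1,2) B(1,2)] dpos by (simp add: algebra_simps)
qed

lemma strict1:
  assumes A: "finite A" "A \<noteq> {}" "A \<inter> J2 = {}"
    and B: "finite B" "B \<noteq> {}" "1 \<in> B"
    and le: "\<And>x. 0 \<le> x \<Longrightarrow> x \<le> 1 \<Longrightarrow> qm B x \<le> qm A x"
  shows "quant_err P B < quant_err P A"
proof -
  define \<delta> where "\<delta> = Min ((\<lambda>a. min (1/8) ((a-1)^2)) ` A)"
  have "1 \<notin> A" using A(3) by (auto simp: J2_def)
  then have dpos: "\<delta> > 0" unfolding \<delta>_def using A by (subst Min_gr_iff) auto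
  have d: "qm B x - qm A x \<le> - \<delta>" if x: "7/8 \<le> x" "x \<le> 1" for x
  proof -
    have "qm B x \<le> (x - 1)^2" by (rule qm_le[OF B(1,3)])
    moreover have "(x-1)^2 + \<delta> \<le> qm A x"
    proof (rule qm_ge[OF A(1,2)])
      fix a assume a: "a \<in> A"
      then have "\<delta> \<le> min (1/8) ((a-1)^2)" unfolding \<delta>_def by (intro Min_le) (use A in auto)
      moreover have "a \<notin> J2" using a A(3) by auto
      ultimately show "(x-1)^2 + \<delta> \<le> (x - a)^2" using ineq1[of a x] x by linarith
    qed
    ultimately show ?thesis by simp
  qed
  have "integral {1/2..1} (\<lambda>x. qm B x - qm A x) = integral {1/2..7/8} (\<lambda>x. qm B x - qm A x) + integral {7/8..1} (\<lambda>x. qm B x - qm A x)"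
    by (intro split_int cont_D A B) auto
  moreover have "integral {7/8..1} (\<lambda>x. qm B x - qm A x) \<le> (-\<delta>) * (1 - 7/8)"
    using d by (intro int_const_le cont_D A B) auto
  moreover have "integral {1/2..7/8} (\<lambda>x. qm B x - qm A x) \<le> 0 * (7/8 - 1/2)"
    using le by (intro int_const_le cont_D A B) auto
  moreover have "integral {0..1/2} (\<lambda>x. qm B x - qm A x) \<le> 0 * (1/2 - 0)"
    using le by (intro int_const_le cont_D A B) auto
  ultimately show ?thesis using qe_diff[OF A(1,2) B(1,2)] dpos by (simp add: algebra_simps)
qed




lemma mean_bound:
  fixes c0 c1 :: real
  shows "3/2 * integral {0..1/2} (\<lambda>x. c0 + c1 * x) + 1/2 * integral {1/2..1} (\<lambda>x. c0 + c1 * x) = c0 + 3/8 * c1"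
proof -
  have "integral {0..1/2} (\<lambda>x. c0 + c1 * x) = c0 * (1/2 - 0) + c1 * ((1/2)^2 - 0^2) / 2"
    by (rule int_poly) simp
  moreover have "integral {1/2..1} (\<lambda>x. c0 + c1 * x) = c0 * (1 - 1/2) + c1 * (1^2 - (1/2)^2) / 2"
    by (rule int_poly) simp
  ultimately show ?thesis by (simp add: power2_eq_square field_simps)
qed

lemma mean1:
  assumes A: "finite A" "A \<noteq> {}" "\<forall>a\<in>A. a > 1/2"
  defines "b \<equiv> Min A"
  shows "quant_err P (insert (3/8) (A - {b})) < quant_err P A"
proof -
  define B where "B = insert (3/8) (A - {b})"
  have bA: "b \<in> A" unfolding b_def using A by auto
  have bmin: "\<And>a. a \<in> A \<Longrightarrow> b \<le> a" unfolding b_def using A by auto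
  have b38: "b > 3/8" using A(3) bA by auto
  have B: "finite B" "B \<noteq> {}" "3/8 \<in> B" using A unfolding B_def by auto
  define c0 where "c0 = 9/64 - b^2"
  define c1 where "c1 = 2 * (b - 3/8)"
  have phi: "(x - 3/8)^2 = (x - b)^2 + (c0 + c1 * x)" for x
    unfolding c0_def c1_def by (simp add: power2_eq_square algebra_simps)
  have pw: "qm B x - qm A x \<le> c0 + c1 * x" for x
  proof -
    have "qm B x - (c0 + c1 * x) \<le> qm A x"
    proof (rule qm_ge[OF A(1,2)])
      fix a assume a: "a \<in> A"
      have q: "qm B x \<le> (x - 3/8)^2" by (rule qm_le[OF B(1,3)])
      show "qm B x - (c0 + c1 * x) \<le> (x - a)^2"
      proof (cases "a = b")
        case True then show ?thesis using q phi[of x] by simp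
      next
        case False
        then have "a \<in> B" using a unfolding B_def by auto
        then have qa: "qm B x \<le> (x - a)^2" by (rule qm_le[OF B(1)])
        show ?thesis
        proof (cases "0 \<le> c0 + c1 * x")
          case True then show ?thesis using qa by linarith
        next
          case False
          have "c0 + c1 * x = (b - 3/8) * (2*x - b - 3/8)" unfolding c0_def c1_def
            by (simp add: power2_eq_square algebra_simps)
          with False have "(b - 3/8) * (2*x - b - 3/8) < 0" by simp
          then have "2*x - b - 3/8 < 0" using b38 by (simp add: mult_less_0_iff)
          then have "x < b" using b38 by simp
          then have "(b - x)^2 \<le> (a - x)^2" using bmin[OF a]
            by (intro power_mono) auto
          then have "(x - b)^2 \<le> (x - a)^2" by (simp add: power2_commute)
          then show ?thesis using q phi[of x] by linarith
        qed
      qed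
    qed
    then show ?thesis by linarith
  qed
  have "integral {0..1/2} (\<lambda>x. qm B x - qm A x) \<le> integral {0..1/2} (\<lambda>x. c0 + c1 * x)"
    using pw by (intro int_le cont_D A B) (auto intro: continuous_intros)
  moreover have "integral {1/2..1} (\<lambda>x. qm B x - qm A x) \<le> integral {1/2..1} (\<lambda>x. c0 + c1 * x)"
    using pw by (intro int_le cont_D A B) (auto intro: continuous_intros)
  moreover have "c0 + 3/8 * c1 < 0"
  proof -
    have "c0 + 3/8 * c1 = -((b - 3/8)^2)" unfolding c0_def c1_def by (simp add: power2_eq_square algebra_simps)
    then show ?thesis using b38 by simp
  qed
  ultimately show ?thesis using qe_diff[OF A(1,2) B(1,2)] mean_bound[of c0 c1] unfolding B_def by linarith
qed




lemma key_ineq: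
  fixes p b h :: real
  assumes "0 \<le> p" "p < b" "b < 1/2" "h = (p + b) / 2"
  shows "b * (1 - 3/2 * h) < 3/8 - 3/4 * h^2"
proof (cases "h \<le> 1/4")
  case True
  have M: "1 - 3/2 * h > 0" using True assms by simp
  have "b \<le> 2 * h" using assms by simp
  then have "b * (1 - 3/2 * h) \<le> 2 * h * (1 - 3/2 * h)" using M by (intro mult_right_mono) auto
  moreover have "(7/36) * (7/36) \<le> (4/9 - h) * (4/9 - h)" using True by (intro mult_mono) auto
  ultimately show ?thesis by (simp add: power2_eq_square algebra_simps)
next
  case False
  have M: "1 - 3/2 * h > 0" using assms by simp
  have "b * (1 - 3/2 * h) < 1/2 * (1 - 3/2 * h)" using M assms by (intro mult_strict_right_mono) auto
  moreover have "(h - 1/4) * (h - 1/2) \<le> 0" using False assms by (intro mult_nonneg_nonpos) auto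
  ultimately have "b - 3/2 * (b * h) < 1/2 - 3/4 * h" "h * h - 3/4 * h + 1/8 \<le> 0"
    by (simp_all add: algebra_simps)
  then show ?thesis using False by (simp add: power2_eq_square algebra_simps)
qed

lemma mean2:
  assumes A: "finite A" "\<forall>a\<in>A. 0 \<le> a \<and> a < 1/2" "card A \<ge> 2"
  shows "\<exists>B. finite B \<and> B \<noteq> {} \<and> card B \<le> card A \<and> quant_err P B < quant_err P A"
proof -
  have Ane: "A \<noteq> {}" using A(3) by auto
  define b where "b = Max A"
  have bA: "b \<in> A" unfolding b_def using A Ane by auto
  have bmax: "\<And>a. a \<in> A \<Longrightarrow> a \<le> b" unfolding b_def using A by auto
  have A'ne: "A - {b} \<noteq> {}"
  proof
    assume "A - {b} = {}"
    then have "A \<subseteq> {b}" by auto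
    then have "card A \<le> 1" using card_mono[of "{b}" A] by auto
    then show False using A(3) by simp
  qed
  define p where "p = Max (A - {b})"
  have pA: "p \<in> A - {b}" unfolding p_def using A(1) A'ne by (intro Max_in) auto
  have pmax: "\<And>a. a \<in> A - {b} \<Longrightarrow> a \<le> p" unfolding p_def using A by auto
  have pb: "0 \<le> p" "p < b" "b < 1/2" using pA bmax[of p] A(2) bA by auto
  define h where "h = (p + b) / 2"
  define M where "M = 1 - 3/2 * h"
  define F where "F = 3/8 - 3/4 * h^2"
  have key: "b * M < F" unfolding M_def F_def by (rule key_ineq[OF pb h_def])
  have Mpos: "M > 0" unfolding M_def h_def using pb by simp
  define t where "t = (F - b * M) / M"
  have tpos: "t > 0" unfolding t_def using key Mpos by simp
  have tM: "t * M = F - b * M" unfolding t_def using Mpos by simp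
  define B where "B = insert (b + t) (A - {b})"
  have B: "finite B" "B \<noteq> {}" "b + t \<in> B" using A unfolding B_def by auto
  have cardB: "card B \<le> card A"
  proof -
    have "card B \<le> card (A - {b}) + 1" unfolding B_def using A by (simp add: card_insert_if)
    also have "\<dots> = card A" using A bA by (simp add: card_Diff_singleton)
    finally show ?thesis .
  qed
  define c0 where "c0 = t^2 + 2 * t * b"
  define c1 where "c1 = - 2 * t"
  have pw1: "qm B x - qm A x \<le> 0" if "x \<le> h" for x
  proof -
    have "qm B x \<le> qm A x"
    proof (rule qm_ge[OF A(1) Ane])
      fix a assume a: "a \<in> A"
      show "qm B x \<le> (x - a)^2"
      proof (cases "a = b")
        case False
        then have "a \<in> B" using a unfolding B_def by auto
        then show ?thesis by (rule qm_le[OF B(1)])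
      next
        case True
        have "p \<in> B" using pA unfolding B_def by auto
        then have "qm B x \<le> (x - p)^2" by (rule qm_le[OF B(1)])
        moreover have "(x - b)^2 - (x - p)^2 = (b - p) * (p + b - 2 * x)"
          by (simp add: power2_eq_square algebra_simps)
        moreover have "(b - p) * (p + b - 2 * x) \<ge> 0" using pb that unfolding h_def
          by (intro mult_nonneg_nonneg) auto
        ultimately have "qm B x \<le> (x - b)^2" by linarith
        then show ?thesis using True by simp
      qed
    qed
    then show ?thesis by simp
  qed
  have pw2: "qm B x - qm A x \<le> c0 + c1 * x" if "h \<le> x" for x
  proof -
    have "qm B x \<le> (x - (b + t))^2" by (rule qm_le[OF B(1,3)])
    moreover have "(x - b)^2 \<le> qm A x"
    proof (rule qm_ge[OF A(1) Ane])
      fix a assume a: "a \<in> A"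
      show "(x - b)^2 \<le> (x - a)^2"
      proof (cases "a = b")
        case True then show ?thesis by simp
      next
        case False
        then have "a \<le> p" using pmax a by auto
        have "(x - a)^2 - (x - b)^2 = (b - a) * (2 * x - a - b)"
          by (simp add: power2_eq_square algebra_simps)
        moreover have "(b - a) * (2 * x - a - b) \<ge> 0" using pb that \<open>a \<le> p\<close> unfolding h_def
          by (intro mult_nonneg_nonneg) auto
        ultimately show ?thesis by linarith
      qed
    qed
    moreover have "(x - (b + t))^2 - (x - b)^2 = c0 + c1 * x"
      unfolding c0_def c1_def by (simp add: power2_eq_square algebra_simps)
    ultimately show ?thesis by linarith
  qed
  have h0: "0 \<le> h" "h \<le> 1/2" unfolding h_def using pb by auto
  have "integral {0..1/2} (\<lambda>x. qm B x - qm A x) = integral {0..h} (\<lambda>x. qm B x - qm A x) + integral {h..1/2} (\<lambda>x. qm B x - qm A x)"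
    using h0 by (intro split_int cont_D A(1) Ane B(1,2)) auto
  moreover have "integral {0..h} (\<lambda>x. qm B x - qm A x) \<le> 0 * (h - 0)"
    using pw1 h0 by (intro int_const_le cont_D A(1) Ane B(1,2)) auto
  moreover have "integral {h..1/2} (\<lambda>x. qm B x - qm A x) \<le> integral {h..1/2} (\<lambda>x. c0 + c1 * x)"
    using pw2 by (intro int_le cont_D A(1) Ane B(1,2)) (auto intro: continuous_intros)
  moreover have "integral {1/2..1} (\<lambda>x. qm B x - qm A x) \<le> integral {1/2..1} (\<lambda>x. c0 + c1 * x)"
    using pw2 h0 by (intro int_le cont_D A(1) Ane B(1,2)) (auto intro: continuous_intros)
  moreover have "3/2 * integral {h..1/2} (\<lambda>x. c0 + c1 * x) + 1/2 * integral {1/2..1} (\<lambda>x. c0 + c1 * x) < 0"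
  proof -
    have e1: "integral {h..1/2} (\<lambda>x. c0 + c1 * x) = c0 * (1/2 - h) + c1 * ((1/2)^2 - h^2) / 2"
    using h0 by (intro int_poly) auto
    have e2: "integral {1/2..1} (\<lambda>x. c0 + c1 * x) = c0 * (1 - 1/2) + c1 * (1^2 - (1/2)^2) / 2"
    by (intro int_poly) auto
    have e3: "3/2 * (c0 * (1/2 - h) + c1 * ((1/2)^2 - h^2) / 2) + 1/2 * (c0 * (1 - 1/2) + c1 * (1^2 - (1/2)^2) / 2)
      = c0 * M + c1 * F"
    unfolding M_def F_def by (simp add: power2_eq_square field_simps)
    have e4: "c0 * M + c1 * F = - (t * (t * M))"
  proof -
    have "c0 * M + c1 * F = t * (t * M) + 2 * t * (b * M) - 2 * t * F"
      unfolding c0_def c1_def by (simp add: power2_eq_square algebra_simps)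
    also have "\<dots> = - (t * (t * M))" unfolding tM by (simp add: algebra_simps)
    finally show ?thesis .
  qed
    have "t * (t * M) > 0" using tpos Mpos by simp
    then show ?thesis unfolding e1 e2 e3 e4 by linarith
  qed
  ultimately have "quant_err P B < quant_err P A"
    using qe_diff[OF A(1) Ane B(1,2)] by linarith
  then show ?thesis using B cardB by blast
qed




lemma qm_subset: "finite B \<Longrightarrow> A \<subseteq> B \<Longrightarrow> finite A \<Longrightarrow> A \<noteq> {} \<Longrightarrow> qm B x \<le> qm A x"
  by (intro qm_ge qm_le) auto

lemma qm_replace:
  assumes "finite A" "a \<in> A" "(x - c)^2 \<le> (x - a)^2"
  shows "qm (insert c (A - {a})) x \<le> qm A x"
proof (rule qm_ge)
  fix a' assume a': "a' \<in> A"
  show "qm (insert c (A - {a})) x \<le> (x - a')^2"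
  proof (cases "a' = a")
    case True
    have "qm (insert c (A - {a})) x \<le> (x - c)^2" using assms by (intro qm_le) auto
    then show ?thesis using True assms by simp
  next
    case False
    then show ?thesis using assms a' by (intro qm_le) auto
  qed
qed (use assms in auto)

lemma card_replace: "finite A \<Longrightarrow> a \<in> A \<Longrightarrow> card (insert c (A - {a})) \<le> card A"
proof -
  assume "finite A" "a \<in> A"
  then have "card (insert c (A - {a})) \<le> Suc (card (A - {a}))" by (simp add: card_insert_if)
  also have "\<dots> = card A" using \<open>finite A\<close> \<open>a \<in> A\<close>
    by (simp add: card_Diff_singleton) (metis Suc_pred card_gt_0_iff empty_iff)
  finally show ?thesis .
qed

lemma qe_nonneg: "finite A \<Longrightarrow> A \<noteq> {} \<Longrightarrow> 0 \<le> quant_err P A"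
  unfolding quant_err_def by (intro Bochner_Integration.integral_nonneg) auto

lemma not_opt:
  assumes "optimal_n_means P n A" "admissible n B" "quant_err P B < quant_err P A"
  shows False
proof -
  have "V_n P n \<le> quant_err P B"
    unfolding V_n_def
  proof (rule cInf_lower)
    show "quant_err P B \<in> {quant_err P \<alpha> |\<alpha>. admissible n \<alpha>}" using assms(2) by auto
    show "bdd_below {quant_err P \<alpha> |\<alpha>. admissible n \<alpha>}"
      by (rule bdd_belowI[of _ 0]) (auto simp: admissible_def intro: qe_nonneg)
  qed
  then show False using assms unfolding optimal_n_means_def by simp
qed

theorem proposition4p3:
  fixes n :: nat and \<alpha> :: "real set"
  assumes "n \<ge> 2" and "optimal_n_means P n \<alpha>"
  shows "\<alpha> \<inter> J1 \<noteq> {} \<and> \<alpha> \<inter> J2 \<noteq> {}"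
proof -
  have adm: "finite \<alpha>" "\<alpha> \<noteq> {}" "card \<alpha> \<le> n"
    using assms(2) unfolding optimal_n_means_def admissible_def by auto
  have part1: "\<alpha> \<inter> J1 \<noteq> {}"
  proof
    assume dis: "\<alpha> \<inter> J1 = {}"
    show False
    proof (cases "\<exists>a\<in>\<alpha>. a < 0")
      case True
      then obtain a where a: "a \<in> \<alpha>" "a < 0" by auto
      define \<gamma> where "\<gamma> = insert 0 (\<alpha> - {a})"
      have g: "finite \<gamma>" "\<gamma> \<noteq> {}" "0 \<in> \<gamma>" unfolding \<gamma>_def using adm by auto
      have "card \<gamma> \<le> n" unfolding \<gamma>_def by (rule order_trans[OF card_replace[OF adm(1) a(1)] adm(3)])
      then have ga: "admissible n \<gamma>" using g unfolding admissible_def by auto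
      have "quant_err P \<gamma> < quant_err P \<alpha>"
      proof (rule strict0[OF adm(1,2) dis g])
        fix x :: real assume x: "0 \<le> x" "x \<le> 1"
        have "(x - 0)^2 \<le> (x - a)^2" using x a by (intro power_mono) auto
        then show "qm \<gamma> x \<le> qm \<alpha> x" unfolding \<gamma>_def by (rule qm_replace[OF adm(1) a(1)])
      qed
      then show False using not_opt[OF assms(2) ga] by simp
    next
      case False
      then have big: "\<forall>a\<in>\<alpha>. a > 1/2" using dis by (force simp: J1_def)
      define \<gamma> where "\<gamma> = insert (3/8) (\<alpha> - {Min \<alpha>})"
      have g: "finite \<gamma>" "\<gamma> \<noteq> {}" unfolding \<gamma>_def using adm by auto
      have "card \<gamma> \<le> n" unfolding \<gamma>_def using adm by (intro order_trans[OF card_replace[OF adm(1)] adm(3)]) auto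
      then have ga: "admissible n \<gamma>" using g unfolding admissible_def by auto
      have "quant_err P \<gamma> < quant_err P \<alpha>" unfolding \<gamma>_def by (rule mean1[OF adm(1,2) big])
      then show False using not_opt[OF assms(2) ga] by simp
    qed
  qed
  have part2: "\<alpha> \<inter> J2 \<noteq> {}"
  proof
    assume dis: "\<alpha> \<inter> J2 = {}"
    show False
    proof (cases "\<exists>a\<in>\<alpha>. a > 1")
      case True
      then obtain a where a: "a \<in> \<alpha>" "a > 1" by auto
      define \<gamma> where "\<gamma> = insert 1 (\<alpha> - {a})"
      have g: "finite \<gamma>" "\<gamma> \<noteq> {}" "1 \<in> \<gamma>" unfolding \<gamma>_def using adm by auto
      have "card \<gamma> \<le> n" unfolding \<gamma>_def by (rule order_trans[OF card_replace[OF adm(1) a(1)] adm(3)])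
      then have ga: "admissible n \<gamma>" using g unfolding admissible_def by auto
      have "quant_err P \<gamma> < quant_err P \<alpha>"
      proof (rule strict1[OF adm(1,2) dis g])
        fix x :: real assume x: "0 \<le> x" "x \<le> 1"
        have "(1 - x)^2 \<le> (a - x)^2" using x a by (intro power_mono) auto
        then have "(x - 1)^2 \<le> (x - a)^2" by (simp add: power2_commute)
        then show "qm \<gamma> x \<le> qm \<alpha> x" unfolding \<gamma>_def by (rule qm_replace[OF adm(1) a(1)])
      qed
      then show False using not_opt[OF assms(2) ga] by simp
    next
      case False
      then have small: "\<forall>a\<in>\<alpha>. a < 1/2" using dis by (force simp: J2_def)
      define \<beta> where "\<beta> = (\<lambda>a. max 0 a) ` \<alpha>"
      have b: "finite \<beta>" "\<beta> \<noteq> {}" "card \<beta> \<le> card \<alpha>" unfolding \<beta>_def using adm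
        by (auto intro: card_image_le)
      have bsmall: "\<forall>a\<in>\<beta>. 0 \<le> a \<and> a < 1/2" unfolding \<beta>_def using small by auto
      have bdis: "\<beta> \<inter> J2 = {}" using bsmall by (auto simp: J2_def)
      have qb: "quant_err P \<beta> \<le> quant_err P \<alpha>"
      proof (rule mono_qe[OF adm(1,2) b(1,2)])
        fix x :: real assume x: "0 \<le> x" "x \<le> 1"
        show "qm \<beta> x \<le> qm \<alpha> x"
        proof (rule qm_ge[OF adm(1,2)])
          fix a assume a: "a \<in> \<alpha>"
          have "qm \<beta> x \<le> (x - max 0 a)^2" using a b(1) unfolding \<beta>_def by (intro qm_le) auto
          moreover have "(x - max 0 a)^2 \<le> (x - a)^2"
          proof (cases "a \<ge> 0")
            case False
            then have "(x - 0)^2 \<le> (x - a)^2" using x by (intro power_mono) auto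
            then show ?thesis using False by simp
          qed simp
          ultimately show "qm \<beta> x \<le> (x - a)^2" by linarith
        qed
      qed
      show False
      proof (cases "card \<beta> < n")
        case True
        define \<gamma> where "\<gamma> = insert 1 \<beta>"
        have g: "finite \<gamma>" "\<gamma> \<noteq> {}" "1 \<in> \<gamma>" unfolding \<gamma>_def using b by auto
        have "card \<gamma> \<le> n" unfolding \<gamma>_def using True b by (simp add: card_insert_if)
        then have ga: "admissible n \<gamma>" using g unfolding admissible_def by auto
        have "quant_err P \<gamma> < quant_err P \<beta>"
          by (rule strict1[OF b(1,2) bdis g]) (use b in \<open>auto simp: \<gamma>_def intro!: qm_subset\<close>)
        then show False using not_opt[OF assms(2) ga] qb by simp
      next
        case False
        then have "card \<beta> \<ge> 2" using assms(1) by simp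
        then obtain \<gamma> where g: "finite \<gamma>" "\<gamma> \<noteq> {}" "card \<gamma> \<le> card \<beta>" "quant_err P \<gamma> < quant_err P \<beta>"
          using mean2[OF b(1) bsmall] by blast
        then have ga: "admissible n \<gamma>" using b adm unfolding admissible_def by auto
        then show False using not_opt[OF assms(2) ga] qb g(4) by simp
      qed
    qed
  qed
  show ?thesis using part1 part2 by simp
qed


end
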